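(* There is a constant $C>0$ such that for each $s\in\{-1,1\}$ and $k\in[K]$, conditionally on $N_s$, $$\mathbb{E}\left[\frac1{N_s}\sum_{i=1}^{N_s}\mathbf{1}\big\{\exists j\neq k:\ \hat\pi_s\bar p_k(X^s_i,s,\zeta^s_{k,i})-s\hat\lambda_k=\hat\pi_s\bar p_j(X^s_i,s,\zeta^s_{j,i})-s\hat\lambda_j\big\}\right]\le\frac{C}{N_s}.$$
   Context: $(X,S,Y)\sim\mathbb{P}$, $X\in\mathcal{X}\subset\mathbb{R}^d$, $S\in\{-1,1\}$, $Y\in[K]$, $\pi_s=\mathbb{P}(S=s)>0$. $\mathcal{D}_n$ is a labeled i.i.d. sample from $\mathbb{P}$ from which estimators $\hat p_k$ are built. Independently, $\mathcal{D}'_N$ consists of $N$ i.i.d. copies of $(X,S)$; $N_s$ is the number with $S=s$, $\hat\pi_s=N_s/N$, $X^s_1,\dots,X^s_{N_s}$ the features with $S=s$. Fix $u>0$; $(\zeta^s_{k,i})$ are i.i.d. Uniform$[0,u]$ independent of everything, $\bar p_k(x,s,\zeta)=\hat p_k(x,s)+\zeta$. $\hat\lambda\in\mathbb{R}^K$ is a minimizer of $\lambda\mapsto\sum_s\frac1{N_s}\sum_{i=1}^{N_s}\max_k(\hat\pi_s\bar p_k(X^s_i,s,\zeta^s_{k,i})-s\lambda_k)$. *)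

theory Defs
  imports "HOL-Probability.Probability"
begin

text \<open>Data of the unlabeled sample D'_N: a map j \<mapsto> (X_j, S_j) for j < N.
  Labels are [K] = {1..K}; sensitive attribute S in {-1,1} (type int).\<close>

definition grp_idx :: "(nat \<Rightarrow> 'a \<times> int) \<Rightarrow> nat \<Rightarrow> int \<Rightarrow> nat list" where
  "grp_idx D N s = filter (\<lambda>j. snd (D j) = s) [0..<N]"

definition Ncnt :: "(nat \<Rightarrow> 'a \<times> int) \<Rightarrow> nat \<Rightarrow> int \<Rightarrow> nat" where
  "Ncnt D N s = length (grp_idx D N s)"

definition pihat :: "(nat \<Rightarrow> 'a \<times> int) \<Rightarrow> nat \<Rightarrow> int \<Rightarrow> real" where
  "pihat D N s = real (Ncnt D N s) / real N"

definition Xs :: "(nat \<Rightarrow> 'a \<times> int) \<Rightarrow> nat \<Rightarrow> int \<Rightarrow> nat \<Rightarrow> 'a" where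
  "Xs D N s i = fst (D (grp_idx D N s ! (i - 1)))"

definition pbar :: "(nat \<Rightarrow> 'a \<Rightarrow> int \<Rightarrow> real) \<Rightarrow> nat \<Rightarrow> 'a \<Rightarrow> int \<Rightarrow> real \<Rightarrow> real" where
  "pbar phat k x s z = phat k x s + z"

definition score :: "(nat \<Rightarrow> 'a \<Rightarrow> int \<Rightarrow> real) \<Rightarrow> (nat \<Rightarrow> 'a \<times> int) \<Rightarrow> (int \<times> nat \<times> nat \<Rightarrow> real)
     \<Rightarrow> nat \<Rightarrow> (nat \<Rightarrow> real) \<Rightarrow> int \<Rightarrow> nat \<Rightarrow> nat \<Rightarrow> real" where
  "score phat D Z N lam s k i =
     pihat D N s * pbar phat k (Xs D N s i) s (Z (s, k, i)) - real_of_int s * lam k"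

text \<open>The empirical objective whose minimizer is hat lambda.\<close>
definition obj :: "nat \<Rightarrow> (nat \<Rightarrow> 'a \<Rightarrow> int \<Rightarrow> real) \<Rightarrow> (nat \<Rightarrow> 'a \<times> int) \<Rightarrow> (int \<times> nat \<times> nat \<Rightarrow> real)
     \<Rightarrow> nat \<Rightarrow> (nat \<Rightarrow> real) \<Rightarrow> real" where
  "obj K phat D Z N lam =
     (\<Sum>s\<in>{-1, 1::int}. (1 / real (Ncnt D N s)) *
        (\<Sum>i = 1..Ncnt D N s. Max ((\<lambda>k. score phat D Z N lam s k i) ` {1..K})))"

definition is_minimizer :: "nat \<Rightarrow> (nat \<Rightarrow> 'a \<Rightarrow> int \<Rightarrow> real) \<Rightarrow> (nat \<Rightarrow> 'a \<times> int)
     \<Rightarrow> (int \<times> nat \<times> nat \<Rightarrow> real) \<Rightarrow> nat \<Rightarrow> (nat \<Rightarrow> real) \<Rightarrow> bool" where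
  "is_minimizer K phat D Z N lam \<longleftrightarrow> (\<forall>l. obj K phat D Z N lam \<le> obj K phat D Z N l)"

definition tie_frac :: "nat \<Rightarrow> (nat \<Rightarrow> 'a \<Rightarrow> int \<Rightarrow> real) \<Rightarrow> (nat \<Rightarrow> 'a \<times> int)
     \<Rightarrow> (int \<times> nat \<times> nat \<Rightarrow> real) \<Rightarrow> nat \<Rightarrow> (nat \<Rightarrow> real) \<Rightarrow> int \<Rightarrow> nat \<Rightarrow> real" where
  "tie_frac K phat D Z N lam s k =
     (1 / real (Ncnt D N s)) *
       (\<Sum>i = 1..Ncnt D N s.
          if (\<exists>j\<in>{1..K}. j \<noteq> k \<and> score phat D Z N lam s k i = score phat D Z N lam s j i)
          then 1 else 0)"

definition lawXS :: "('x::topological_space \<times> int \<times> nat) measure \<Rightarrow> ('x \<times> int) measure" where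
  "lawXS P = distr P (borel \<Otimes>\<^sub>M count_space UNIV) (\<lambda>(x, s, y). (x, s))"

text \<open>Joint probability space of (D_n, D'_N, (zeta^s_{k,i})): independent product of
  n0 i.i.d. copies of (X,S,Y), N i.i.d. copies of (X,S), and i.i.d. Uniform[0,u] variables
  indexed by s in {-1,1}, k in [K], i in {1..N}.\<close>
definition Omega :: "('x::topological_space \<times> int \<times> nat) measure \<Rightarrow> nat \<Rightarrow> nat \<Rightarrow> nat \<Rightarrow> real
   \<Rightarrow> ((nat \<Rightarrow> 'x \<times> int \<times> nat) \<times> (nat \<Rightarrow> 'x \<times> int) \<times> (int \<times> nat \<times> nat \<Rightarrow> real)) measure" where
  "Omega P n0 N K u =
     PiM {..<n0} (\<lambda>_. P) \<Otimes>\<^sub>M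
       (PiM {..<N} (\<lambda>_. lawXS P) \<Otimes>\<^sub>M
        PiM ({-1, 1} \<times> {1..K} \<times> {1..N}) (\<lambda>_. uniform_measure lborel {0..u}))"

end

theory Submission imports Defs begin

lemma null_coord:
  fixes A :: "'a measure" and B :: "'b measure" and U :: "real measure" and I :: "'t set"
  assumes sfB: "sigma_finite_measure B" and fin: "finite I" and tI: "t \<in> I"
    and pU: "prob_space U" and sU: "sets U = sets borel"
    and U0: "\<And>c. emeasure U {c} = 0"
    and Gm: "G \<in> borel_measurable (A \<Otimes>\<^sub>M (B \<Otimes>\<^sub>M PiM I (\<lambda>_. U)))"
    and Gi: "\<And>a b z y. G (a, b, z(t := y)) = G (a, b, z)"
  shows "emeasure (A \<Otimes>\<^sub>M (B \<Otimes>\<^sub>M PiM I (\<lambda>_. U)))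
           {w \<in> space (A \<Otimes>\<^sub>M (B \<Otimes>\<^sub>M PiM I (\<lambda>_. U))). snd (snd w) t = G w} = 0"
proof -
  interpret PU: product_prob_space "\<lambda>_. U" I
    by (simp add: pU product_prob_space.intro product_prob_space_axioms.intro product_sigma_finite.intro prob_space_imp_sigma_finite)
  interpret B: sigma_finite_measure B by (rule sfB)
  interpret PPi: sigma_finite_measure "PiM I (\<lambda>_. U)" 
    by (simp add: PU.P.sigma_finite_measure_axioms)
  interpret BPi: pair_sigma_finite B "PiM I (\<lambda>_. U)" by standard
  interpret BPi': sigma_finite_measure "B \<Otimes>\<^sub>M PiM I (\<lambda>_. U)"
    by (rule BPi.sigma_finite_measure_axioms)
  define E where "E = {w \<in> space (A \<Otimes>\<^sub>M (B \<Otimes>\<^sub>M PiM I (\<lambda>_. U))). snd (snd w) t = G w}"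
  have Em: "E \<in> sets (A \<Otimes>\<^sub>M (B \<Otimes>\<^sub>M PiM I (\<lambda>_. U)))"
    unfolding E_def using Gm tI sU by measurable
  have inner: "(\<integral>\<^sup>+ z. indicator E (a, b, z) \<partial>PiM I (\<lambda>_. U)) = 0" for a b
  proof (cases "a \<in> space A \<and> b \<in> space B")
    case False
    then have "\<And>z. indicator E (a, b, z) = (0::ennreal)"
      using sets.sets_into_space[OF Em] by (auto simp: indicator_def space_pair_measure)
    then show ?thesis by simp
  next
    case True
    have Ieq: "insert t (I - {t}) = I" using tI by auto
    have fm: "(\<lambda>z. indicator E (a, b, z) :: ennreal) \<in> borel_measurable (PiM (insert t (I - {t})) (\<lambda>_. U))"
    proof -
      have "(\<lambda>z. (a, b, z)) \<in> measurable (PiM I (\<lambda>_. U)) (A \<Otimes>\<^sub>M (B \<Otimes>\<^sub>M PiM I (\<lambda>_. U)))"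
        using True by (intro measurable_Pair measurable_const) auto
      then show ?thesis unfolding Ieq using Em by (intro measurable_compose[OF _ borel_measurable_indicator]) auto
    qed
    have "(\<integral>\<^sup>+ z. indicator E (a, b, z) \<partial>PiM I (\<lambda>_. U))
        = (\<integral>\<^sup>+ x. (\<integral>\<^sup>+ y. indicator E (a, b, x(t := y)) \<partial>U) \<partial>PiM (I - {t}) (\<lambda>_. U))"
      using PU.product_nn_integral_insert[OF _ _ fm] fin Ieq by simp
    also have "\<dots> = 0"
    proof (rule nn_integral_zero')
      show "AE x in PiM (I - {t}) (\<lambda>_. U). (\<integral>\<^sup>+ y. indicator E (a, b, x(t := y)) \<partial>U) = 0"
      proof (rule AE_I2)
        fix x
        have "(\<integral>\<^sup>+ y. indicator E (a, b, x(t := y)) \<partial>U) \<le> (\<integral>\<^sup>+ y. indicator {G (a, b, x)} y \<partial>U)"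
          by (rule nn_integral_mono) (auto simp: E_def indicator_def Gi)
        also have "\<dots> = emeasure U {G (a, b, x)}"
          by (rule nn_integral_indicator) (simp add: sU)
        finally show "(\<integral>\<^sup>+ y. indicator E (a, b, x(t := y)) \<partial>U) = 0" using U0 by simp
      qed
    qed
    finally show ?thesis .
  qed
  have mid: "(\<integral>\<^sup>+ x. indicator E (a, x) \<partial>(B \<Otimes>\<^sub>M PiM I (\<lambda>_. U))) = 0" for a
  proof (cases "a \<in> space A")
    case False
    then have "\<And>x. indicator E (a, x) = (0::ennreal)"
      using sets.sets_into_space[OF Em] by (auto simp: indicator_def space_pair_measure)
    then show ?thesis by simp
  next
    case True
    have fm: "(\<lambda>x. indicator E (a, x) :: ennreal) \<in> borel_measurable (B \<Otimes>\<^sub>M PiM I (\<lambda>_. U))"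
    proof -
      have "Pair a \<in> measurable (B \<Otimes>\<^sub>M PiM I (\<lambda>_. U)) (A \<Otimes>\<^sub>M (B \<Otimes>\<^sub>M PiM I (\<lambda>_. U)))"
        using True by (intro measurable_Pair measurable_const measurable_ident_sets) auto
      then show ?thesis using Em by (intro measurable_compose[OF _ borel_measurable_indicator]) auto
    qed
    have "(\<integral>\<^sup>+ x. indicator E (a, x) \<partial>(B \<Otimes>\<^sub>M PiM I (\<lambda>_. U)))
        = (\<integral>\<^sup>+ b. \<integral>\<^sup>+ z. indicator E (a, b, z) \<partial>PiM I (\<lambda>_. U) \<partial>B)"
      using sigma_finite_measure.nn_integral_fst[OF PU.P.sigma_finite_measure_axioms fm] by simp
    also have "\<dots> = 0" using inner by simp
    finally show ?thesis .
  qed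
  have "emeasure (A \<Otimes>\<^sub>M (B \<Otimes>\<^sub>M PiM I (\<lambda>_. U))) E
      = (\<integral>\<^sup>+ a. \<integral>\<^sup>+ x. indicator E (a, x) \<partial>(B \<Otimes>\<^sub>M PiM I (\<lambda>_. U)) \<partial>A)"
    by (rule sigma_finite_measure.emeasure_pair_measure[OF BPi.sigma_finite_measure_axioms Em])
  also have "\<dots> = 0" using mid by simp
  finally show ?thesis unfolding E_def .
qed

lemma sum_if_card: "finite S \<Longrightarrow> (\<Sum>i\<in>S. if P i then 1 else 0) = real (card {i\<in>S. P i})"
  by (simp add: sum.If_cases Int_def conj_commute)

lemma tie_bound:
  fixes phat :: "nat \<Rightarrow> 'a \<Rightarrow> int \<Rightarrow> real"
  assumes m: "Ncnt D N s = m" "m \<ge> 1" and k: "k \<in> {1..K}"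
    and nobad: "\<And>j i i' a b. j \<in> {1..K} \<Longrightarrow> j \<noteq> k \<Longrightarrow> i \<in> {1..N} \<Longrightarrow> i' \<in> {1..N} \<Longrightarrow> i \<noteq> i'
        \<Longrightarrow> a < N \<Longrightarrow> b < N \<Longrightarrow>
        Z (s, k, i) \<noteq> Z (s, j, i) + Z (s, k, i') - Z (s, j, i')
           + phat k (fst (D b)) s - phat j (fst (D b)) s - phat k (fst (D a)) s + phat j (fst (D a)) s"
  shows "tie_frac K phat D Z N lam s k \<le> real K / real m"
proof -
  let ?sc = "score phat D Z N lam s"
  define T where "T = {i\<in>{1..m}. \<exists>j\<in>{1..K}. j \<noteq> k \<and> ?sc k i = ?sc j i}"
  have mN: "m \<le> N" using m(1) unfolding Ncnt_def grp_idx_def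
    by (metis diff_zero length_filter_le length_upt)
  have pipos: "pihat D N s > 0" unfolding pihat_def using m mN by simp
  define f where "f i = (SOME j. j\<in>{1..K} \<and> j \<noteq> k \<and> ?sc k i = ?sc j i)" for i
  have fT: "f i \<in> {1..K} \<and> f i \<noteq> k \<and> ?sc k i = ?sc (f i) i" if "i \<in> T" for i
    using that unfolding T_def f_def by (metis (mono_tags, lifting) mem_Collect_eq someI_ex)
  have idx: "grp_idx D N s ! (i - 1) < N" if "i \<in> {1..m}" for i
  proof -
    have "i - 1 < length (grp_idx D N s)" using that m(1) unfolding Ncnt_def by auto
    then have "grp_idx D N s ! (i - 1) \<in> set (grp_idx D N s)" by (rule nth_mem)
    then show ?thesis unfolding grp_idx_def by simp
  qed
  have inj: "inj_on f T"
  proof (rule inj_onI, rule ccontr)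
    fix i i' assume iT: "i \<in> T" and i'T: "i' \<in> T" and eq: "f i = f i'" and ne: "i \<noteq> i'"
    define j where "j = f i"
    have i1: "i \<in> {1..m}" and i1': "i' \<in> {1..m}" using iT i'T unfolding T_def by auto
    define a where "a = grp_idx D N s ! (i - 1)"
    define b where "b = grp_idx D N s ! (i' - 1)"
    have a: "a < N" and b: "b < N" using idx i1 i1' unfolding a_def b_def by auto
    have h1: "?sc k i = ?sc j i" and h2: "?sc k i' = ?sc j i'" and j: "j \<in> {1..K}" "j \<noteq> k"
      using fT[OF iT] fT[OF i'T] eq unfolding j_def by auto
    have Xa: "Xs D N s i = fst (D a)" and Xb: "Xs D N s i' = fst (D b)"
      unfolding Xs_def a_def b_def by auto
    let ?p = "pihat D N s"
    have e1: "?p * (phat k (fst (D a)) s + Z (s,k,i) - phat j (fst (D a)) s - Z (s,j,i)) = real_of_int s * (lam k - lam j)"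
      using h1 Xa unfolding score_def pbar_def by (simp add: algebra_simps)
    have e2: "?p * (phat k (fst (D b)) s + Z (s,k,i') - phat j (fst (D b)) s - Z (s,j,i')) = real_of_int s * (lam k - lam j)"
      using h2 Xb unfolding score_def pbar_def by (simp add: algebra_simps)
    have "phat k (fst (D a)) s + Z (s,k,i) - phat j (fst (D a)) s - Z (s,j,i)
        = phat k (fst (D b)) s + Z (s,k,i') - phat j (fst (D b)) s - Z (s,j,i')"
      using e1 e2 pipos by (metis mult_left_cancel order_less_irrefl)
    moreover have "Z (s, k, i) \<noteq> Z (s, j, i) + Z (s, k, i') - Z (s, j, i')
           + phat k (fst (D b)) s - phat j (fst (D b)) s - phat k (fst (D a)) s + phat j (fst (D a)) s"
      using nobad[OF j _ _ ne a b] i1 i1' mN by auto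
    ultimately show False by linarith
  qed
  have "card T \<le> card ({1..K} - {k})"
    by (rule card_inj_on_le[OF inj]) (use fT in auto)
  also have "\<dots> \<le> K" by (metis card_Diff1_le card_atLeastAtMost diff_Suc_1 finite_atLeastAtMost le_trans order_refl)
  finally have cT: "card T \<le> K" .
  have "tie_frac K phat D Z N lam s k = real (card T) / real m"
    unfolding tie_frac_def T_def using m(1) by (simp add: sum_if_card)
  also have "\<dots> \<le> real K / real m" using cT m by (simp add: divide_right_mono)
  finally show ?thesis .
qed

lemma Ncnt_real_sum: "real (Ncnt D N s) = (\<Sum>j<N. if snd (D j) = s then 1 else 0)"
  by (induction N) (auto simp: Ncnt_def grp_idx_def)

theorem lemmaB:
  fixes P :: "((real ^ ('d::finite)) \<times> int \<times> nat) measure"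
    and K n0 :: nat and u :: real
    and est :: "(nat \<Rightarrow> (real ^ 'd) \<times> int \<times> nat) \<Rightarrow> nat \<Rightarrow> (real ^ 'd) \<Rightarrow> int \<Rightarrow> real"
  assumes "prob_space P"
    and "sets P = sets (borel \<Otimes>\<^sub>M (count_space UNIV \<Otimes>\<^sub>M count_space UNIV))"
    and "AE w in P. fst (snd w) \<in> {-1, 1} \<and> snd (snd w) \<in> {1..K}"
    and "\<forall>s\<in>{-1, 1::int}. emeasure P {w \<in> space P. fst (snd w) = s} > 0"
    and "K \<ge> 1" and "u > 0"
    and "\<forall>k s. (\<lambda>(d, x). est d k x s) \<in> borel_measurable (PiM {..<n0} (\<lambda>_. P) \<Otimes>\<^sub>M borel)"
  shows "\<exists>C>0. \<forall>N lam.
    (\<forall>w\<in>space (Omega P n0 N K u).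
        (\<exists>l. is_minimizer K (est (fst w)) (fst (snd w)) (snd (snd w)) N l) \<longrightarrow>
        is_minimizer K (est (fst w)) (fst (snd w)) (snd (snd w)) N (lam w)) \<longrightarrow>
    (\<forall>s\<in>{-1, 1::int}. \<forall>k\<in>{1..K}. \<forall>m\<ge>1.
       (\<integral>\<^sup>+ w. ennreal (tie_frac K (est (fst w)) (fst (snd w)) (snd (snd w)) N (lam w) s k)
                 * indicator {w \<in> space (Omega P n0 N K u). Ncnt (fst (snd w)) N s = m} w
          \<partial>Omega P n0 N K u)
       \<le> ennreal (C / real m) *
           emeasure (Omega P n0 N K u) {w \<in> space (Omega P n0 N K u). Ncnt (fst (snd w)) N s = m})"
proof -
  note asm = assms
  define U where "U = uniform_measure lborel {0..u}"
  have pU: "prob_space U" unfolding U_def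
    by (rule prob_space_uniform_measure) (use asm(6) in auto)
  have sU: "sets U = sets borel" unfolding U_def by simp
  have U0: "emeasure U {c} = 0" for c
  proof -
    have "emeasure U {c} = emeasure lborel ({0..u} \<inter> {c}) / emeasure lborel {0..u}"
      unfolding U_def by (rule emeasure_uniform_measure) auto
    also have "emeasure lborel ({0..u} \<inter> {c}) = 0"
      by (rule emeasure_eq_0[of "{c}"]) auto
    finally show ?thesis by simp
  qed
  have mXS: "(\<lambda>(x, s, y). (x, s)) \<in> measurable P (borel \<Otimes>\<^sub>M count_space UNIV)"
    by (subst measurable_cong_sets[OF asm(2) refl]) measurable
  have pXS: "prob_space (lawXS P)" unfolding lawXS_def
    by (rule prob_space.prob_space_distr[OF asm(1) mXS])
  have sXS: "sets (lawXS P) = sets (borel \<Otimes>\<^sub>M count_space UNIV)"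
    unfolding lawXS_def by simp
  show ?thesis
  proof (intro exI[of _ "real K"] conjI allI impI ballI)
    show "real K > 0" using asm(5) by simp
    fix N :: nat and lam and s :: int and k m :: nat
    assume s: "s \<in> {-1, 1::int}" and k: "k \<in> {1..K}" and m: "1 \<le> m"
    define A where "A = PiM {..<n0} (\<lambda>_. P)"
    define B where "B = PiM {..<N} (\<lambda>_. lawXS P)"
    define I where "I = {-1, 1::int} \<times> {1..K} \<times> {1..N}"
    define \<Omega> where "\<Omega> = A \<Otimes>\<^sub>M (B \<Otimes>\<^sub>M PiM I (\<lambda>_. U))"
    have Om: "Omega P n0 N K u = \<Omega>"
      unfolding Omega_def \<Omega>_def A_def B_def I_def U_def ..
    have sfB: "sigma_finite_measure B" unfolding B_def
      using prob_space_PiM[of "{..<N}" "\<lambda>_. lawXS P"] pXS prob_space_imp_sigma_finite by blast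
    have Xm: "(\<lambda>w. fst (fst (snd w) a)) \<in> borel_measurable \<Omega>" if a: "a < N" for a
    proof -
      have f1: "(\<lambda>w. fst (snd w)) \<in> measurable \<Omega> B" unfolding \<Omega>_def by measurable
      have f2: "(\<lambda>D. D a) \<in> measurable B (lawXS P)" unfolding B_def
        using a by (intro measurable_component_singleton) auto
      have f3: "fst \<in> measurable (lawXS P) borel"
        by (subst measurable_cong_sets[OF sXS refl]) measurable
      show ?thesis using measurable_compose[OF measurable_compose[OF f1 f2] f3] by simp
    qed
    have Zm: "(\<lambda>w. snd (snd w) t) \<in> borel_measurable \<Omega>" if t: "t \<in> I" for t
    proof -
      have f1: "(\<lambda>w. snd (snd w)) \<in> measurable \<Omega> (PiM I (\<lambda>_. U))" unfolding \<Omega>_def by measurable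
      have f2: "(\<lambda>z. z t) \<in> measurable (PiM I (\<lambda>_. U)) U"
        using t by (intro measurable_component_singleton) auto
      have f3: "(\<lambda>x. x) \<in> measurable U borel"
        by (subst measurable_cong_sets[OF sU refl]) simp
      show ?thesis using measurable_compose[OF measurable_compose[OF f1 f2] f3] by simp
    qed
    have Em: "(\<lambda>w. est (fst w) j (fst (fst (snd w) a)) s) \<in> borel_measurable \<Omega>" if a: "a < N" for a j
    proof -
      have f1: "(\<lambda>w. (fst w, fst (fst (snd w) a))) \<in> measurable \<Omega> (A \<Otimes>\<^sub>M borel)"
        by (intro measurable_Pair Xm[OF a]) (simp add: \<Omega>_def)
      show ?thesis using measurable_compose[OF f1 asm(7)[rule_format, of j s, folded A_def]] by simp
    qed
    define Gf where "Gf = (\<lambda>(j::nat, i::nat, i'::nat, a::nat, b::nat) (w::(nat \<Rightarrow> (real ^ 'd) \<times> int \<times> nat) \<times> (nat \<Rightarrow> (real ^ 'd) \<times> int) \<times> (int \<times> nat \<times> nat \<Rightarrow> real)).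
        snd (snd w) (s, j, i) + snd (snd w) (s, k, i') - snd (snd w) (s, j, i')
        + est (fst w) k (fst (fst (snd w) b)) s - est (fst w) j (fst (fst (snd w) b)) s
        - est (fst w) k (fst (fst (snd w) a)) s + est (fst w) j (fst (fst (snd w) a)) s)"
    define J where "J = {(j, i, i', a, b). j \<in> {1..K} \<and> j \<noteq> k \<and> i \<in> {1..N} \<and> i' \<in> {1..N} \<and> i \<noteq> i' \<and> a < N \<and> b < N}"
    define E where "E = (\<lambda>x. {w \<in> space \<Omega>. snd (snd w) (s, k, fst (snd x)) = Gf x w})"
    have Enull: "E x \<in> null_sets \<Omega>" if x: "x \<in> J" for x
    proof -
      obtain j i i' a b where xe: "x = (j, i, i', a, b)" by (cases x) auto
      have jj: "j \<in> {1..K}" "j \<noteq> k" "i \<in> {1..N}" "i' \<in> {1..N}" "i \<noteq> i'" "a < N" "b < N"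
        using x unfolding J_def xe by auto
      have GM: "Gf x \<in> borel_measurable \<Omega>"
        unfolding xe Gf_def using jj s k
        by (simp only: prod.case) (intro borel_measurable_add borel_measurable_diff Zm Em; auto simp: I_def)
      have tI: "(s, k, i) \<in> I" using s k jj unfolding I_def by auto
      have E0: "emeasure \<Omega> (E x) = 0"
        unfolding E_def \<Omega>_def xe
        apply simp
        apply (rule null_coord[OF sfB _ tI pU sU U0])
        using GM jj unfolding xe \<Omega>_def I_def Gf_def by auto
      have Es: "E x \<in> sets \<Omega>"
      proof -
        have "(\<lambda>w. snd (snd w) (s, k, fst (snd x)) - Gf x w) \<in> borel_measurable \<Omega>"
          using GM Zm[OF tI] unfolding xe by simp
        from measurable_sets[OF this, of "{0}"] show ?thesis
          unfolding E_def by (simp add: vimage_def Int_def conj_commute)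
      qed
      show ?thesis using E0 Es by (simp add: null_sets_def)
    qed
    define Bad where "Bad = (\<Union>x\<in>J. E x)"
    have cJ: "countable J"
      by (rule countable_finite, rule finite_subset[of _ "{1..K} \<times> {1..N} \<times> {1..N} \<times> {..<N} \<times> {..<N}"])
        (auto simp: J_def)
    have Badnull: "Bad \<in> null_sets \<Omega>" unfolding Bad_def by (rule null_sets_UN'[OF cJ Enull])
    define Aset where "Aset = {w \<in> space \<Omega>. Ncnt (fst (snd w)) N s = m}"
    define F where "F w = (\<Sum>j<N. indicator {w \<in> space \<Omega>. snd (fst (snd w) j) = s} w :: real)" for w
    have Sm: "{w \<in> space \<Omega>. snd (fst (snd w) j) = s} \<in> sets \<Omega>" if j: "j < N" for j
    proof -
      have f1: "(\<lambda>w. fst (snd w)) \<in> measurable \<Omega> B" unfolding \<Omega>_def by measurable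
      have f2: "(\<lambda>D. D j) \<in> measurable B (lawXS P)" unfolding B_def
        using j by (intro measurable_component_singleton) auto
      have f3: "snd \<in> measurable (lawXS P) (count_space UNIV)"
        by (subst measurable_cong_sets[OF sXS refl]) measurable
      have "(\<lambda>w. snd (fst (snd w) j)) \<in> measurable \<Omega> (count_space UNIV)"
        using measurable_compose[OF measurable_compose[OF f1 f2] f3] by simp
      from measurable_sets[OF this, of "{s}"] show ?thesis
        by (simp add: vimage_def Int_def conj_commute)
    qed
    have Fm: "F \<in> borel_measurable \<Omega>" unfolding F_def
      by (intro borel_measurable_sum borel_measurable_indicator Sm) auto
    have FN: "F w = real (Ncnt (fst (snd w)) N s)" if "w \<in> space \<Omega>" for w
      unfolding F_def Ncnt_real_sum using that by (intro sum.cong) (auto simp: indicator_def)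
    have Aeq: "Aset = F -` {real m} \<inter> space \<Omega>" unfolding Aset_def using FN by auto
    have Am: "Aset \<in> sets \<Omega>" unfolding Aeq by (rule measurable_sets[OF Fm]) simp
    have AE: "AE w in \<Omega>. ennreal (tie_frac K (est (fst w)) (fst (snd w)) (snd (snd w)) N (lam w) s k)
                 * indicator Aset w \<le> ennreal (real K / real m) * indicator Aset w"
    proof (rule AE_I'[OF Badnull], safe)
      fix w assume ws: "w \<in> space \<Omega>" and nle: "\<not> ennreal (tie_frac K (est (fst w)) (fst (snd w)) (snd (snd w)) N (lam w) s k)
                 * indicator Aset w \<le> ennreal (real K / real m) * indicator Aset w"
      show "w \<in> Bad"
      proof (rule ccontr)
        assume nb: "w \<notin> Bad"
        have wA: "w \<in> Aset" using nle by (cases "w \<in> Aset") auto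
        have "tie_frac K (est (fst w)) (fst (snd w)) (snd (snd w)) N (lam w) s k \<le> real K / real m"
        proof (rule tie_bound)
          show "Ncnt (fst (snd w)) N s = m" using wA unfolding Aset_def by auto
          show "1 \<le> m" by fact
          show "k \<in> {1..K}" by fact
          fix j i i' a b assume h: "j \<in> {1..K}" "j \<noteq> k" "i \<in> {1..N}" "i' \<in> {1..N}" "i \<noteq> i'" "a < N" "b < N"
          have "(j, i, i', a, b) \<in> J" using h unfolding J_def by auto
          then have "w \<notin> E (j, i, i', a, b)" using nb unfolding Bad_def by auto
          then show "snd (snd w) (s, k, i) \<noteq> snd (snd w) (s, j, i) + snd (snd w) (s, k, i') - snd (snd w) (s, j, i')
            + est (fst w) k (fst (fst (snd w) b)) s - est (fst w) j (fst (fst (snd w) b)) s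
            - est (fst w) k (fst (fst (snd w) a)) s + est (fst w) j (fst (fst (snd w) a)) s"
            using ws unfolding E_def Gf_def by auto
        qed
        then show False using nle wA by (simp add: ennreal_leI)
      qed
    qed
    have "(\<integral>\<^sup>+ w. ennreal (tie_frac K (est (fst w)) (fst (snd w)) (snd (snd w)) N (lam w) s k)
                 * indicator Aset w \<partial>\<Omega>) \<le> (\<integral>\<^sup>+ w. ennreal (real K / real m) * indicator Aset w \<partial>\<Omega>)"
      by (rule nn_integral_mono_AE[OF AE])
    also have "\<dots> = ennreal (real K / real m) * emeasure \<Omega> Aset"
      by (rule nn_integral_cmult_indicator[OF Am])
    finally show "(\<integral>\<^sup>+ w. ennreal (tie_frac K (est (fst w)) (fst (snd w)) (snd (snd w)) N (lam w) s k)
                 * indicator {w \<in> space (Omega P n0 N K u). Ncnt (fst (snd w)) N s = m} w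
          \<partial>Omega P n0 N K u)
       \<le> ennreal (real K / real m) *
           emeasure (Omega P n0 N K u) {w \<in> space (Omega P n0 N K u). Ncnt (fst (snd w)) N s = m}"
      unfolding Om Aset_def .
  qed
qed

end
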